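(* Let $\lambda\in\mathbb{R}$, let $n$ be a positive integer and let $k$ be a positive integer. Then \[ S_{k,\lambda}(n)=\frac{(n+1)_{k+1,\lambda}-(1)_{k+1,\lambda}}{k+1}-\frac{1}{k+1}\sum_{r=0}^{k-1}\binom{k+1}{r}(1)_{k+1-r,\lambda}\,S_{r,\lambda}(n). \]
   Context: For $\lambda\in\mathbb{R}$ the degenerate falling factorials are $(x)_{0,\lambda}=1$ and $(x)_{m,\lambda}=x(x-\lambda)(x-2\lambda)\cdots(x-(m-1)\lambda)$ for $m\ge 1$. For a nonnegative integer $r$ and positive integer $n$, $S_{r,\lambda}(n)=\sum_{j=1}^{n}(j)_{r,\lambda}=(1)_{r,\lambda}+(2)_{r,\lambda}+\cdots+(n)_{r,\lambda}$ (so in particular $S_{0,\lambda}(n)=n$). *)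

theory Defs
  imports Complex_Main
begin

definition dfall :: "real \<Rightarrow> nat \<Rightarrow> real \<Rightarrow> real" where
  "dfall x m lam = (\<Prod>i<m. (x - real i * lam))"

definition dsum :: "nat \<Rightarrow> real \<Rightarrow> nat \<Rightarrow> real" where
  "dsum r lam n = (\<Sum>j=1..n. dfall (real j) r lam)"

end

theory Submission
  imports Defs
begin

lemma dfall_Suc: "dfall x (Suc m) lam = dfall x m lam * (x - real m * lam)"
  by (simp add: dfall_def)

lemma dfall_binom:
  "dfall (x + y) m lam = (\<Sum>r\<le>m. real (m choose r) * dfall x r lam * dfall y (m - r) lam)"
proof (induction m)
  case 0
  then show ?case by (simp add: dfall_def)
next
  case (Suc m)
  define f where "f r = dfall x r lam * dfall y (Suc m - r) lam" for r
  have A: "(\<Sum>r\<le>m. real (m choose r) * dfall x r lam * dfall y (m - r) lam * (x + y - real m * lam))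
     = (\<Sum>r\<le>m. real (m choose r) * f (Suc r)) + (\<Sum>r\<le>m. real (m choose r) * f r)"
    unfolding sum.distrib[symmetric]
  proof (rule sum.cong[OF refl])
    fix r assume "r \<in> {..m}"
    then have r: "r \<le> m" by simp
    have e: "Suc m - r = Suc (m - r)" using r by simp
    have e2: "real (m - r) = real m - real r" using r by simp
    show "real (m choose r) * dfall x r lam * dfall y (m - r) lam * (x + y - real m * lam)
      = real (m choose r) * f (Suc r) + real (m choose r) * f r"
      unfolding f_def using r by (simp add: dfall_Suc e e2 algebra_simps)
  qed
  have B: "(\<Sum>r\<le>Suc m. real (Suc m choose r) * f r)
      = f 0 + (\<Sum>r\<le>m. real (m choose r) * f (Suc r)) + (\<Sum>r\<le>m. real (m choose Suc r) * f (Suc r))"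
    apply (subst sum.atMost_Suc_shift)
    apply (simp only: binomial_Suc_Suc of_nat_add distrib_right sum.distrib)
    apply simp
    done
  have C: "f 0 + (\<Sum>r\<le>m. real (m choose Suc r) * f (Suc r)) = (\<Sum>r\<le>m. real (m choose r) * f r)"
  proof -
    have "f 0 + (\<Sum>r\<le>m. real (m choose Suc r) * f (Suc r)) = (\<Sum>r\<le>Suc m. real (m choose r) * f r)"
      by (subst sum.atMost_Suc_shift) simp
    also have "\<dots> = (\<Sum>r\<le>m. real (m choose r) * f r)" by simp
    finally show ?thesis .
  qed
  have "dfall (x + y) (Suc m) lam = dfall (x + y) m lam * (x + y - real m * lam)"
    by (simp add: dfall_Suc)
  also have "\<dots> = (\<Sum>r\<le>m. real (m choose r) * dfall x r lam * dfall y (m - r) lam * (x + y - real m * lam))"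
    by (simp add: Suc.IH sum_distrib_right)
  also have "\<dots> = (\<Sum>r\<le>Suc m. real (Suc m choose r) * f r)" using A B C by simp
  finally show ?case by (simp add: f_def mult.assoc)
qed

theorem theorem2p3:
  fixes lam :: real and n k :: nat
  assumes "n \<ge> 1" and "k \<ge> 1"
  shows "dsum k lam n =
    (dfall (real n + 1) (k + 1) lam - dfall 1 (k + 1) lam) / real (k + 1)
    - (1 / real (k + 1)) * (\<Sum>r=0..k-1. real ((k + 1) choose r) * dfall 1 (k + 1 - r) lam * dsum r lam n)"
proof -
  define g where "g r = real ((k + 1) choose r) * dfall 1 (k + 1 - r) lam * dsum r lam n" for r
  have tele: "(\<Sum>j=1..n. dfall (real j + 1) (k+1) lam - dfall (real j) (k+1) lam)
      = dfall (real n + 1) (k + 1) lam - dfall 1 (k + 1) lam"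
    using assms(1)
  proof (induction n rule: dec_induct)
    case base then show ?case by simp
  next
    case (step m) then show ?case by (simp add: add.commute)
  qed
  have "(\<Sum>j=1..n. dfall (real j + 1) (k+1) lam) = (\<Sum>j=1..n. \<Sum>r\<le>k+1. real ((k+1) choose r) * dfall (real j) r lam * dfall 1 (k+1-r) lam)"
    by (simp add: dfall_binom)
  also have "\<dots> = (\<Sum>r\<le>k+1. g r)"
    unfolding g_def dsum_def by (subst sum.swap) (simp add: sum_distrib_left sum_distrib_right mult.assoc mult.commute mult.left_commute)
  also have "\<dots> = (\<Sum>r=0..k-1. g r) + g k + g (k+1)"
  proof -
    have "{..k+1} = insert (k+1) (insert k {0..k-1})" using assms(2) by auto
    moreover have "k \<notin> {0..k-1}" using assms(2) by auto
    ultimately show ?thesis by simp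
  qed
  finally have E: "(\<Sum>j=1..n. dfall (real j + 1) (k+1) lam) = (\<Sum>r=0..k-1. g r) + g k + g (k+1)" .
  have gk: "g k = real (k+1) * dsum k lam n" unfolding g_def by (simp add: dfall_def)
  have gk1: "g (k+1) = dsum (k+1) lam n" unfolding g_def by (simp add: dfall_def)
  have "(\<Sum>j=1..n. dfall (real j + 1) (k+1) lam - dfall (real j) (k+1) lam)
     = (\<Sum>r=0..k-1. g r) + real (k+1) * dsum k lam n"
    using E gk gk1 by (simp add: sum_subtractf dsum_def)
  then have "real (k+1) * dsum k lam n = dfall (real n + 1) (k + 1) lam - dfall 1 (k + 1) lam - (\<Sum>r=0..k-1. g r)"
    using tele by simp
  note H = this
  have "dsum k lam n = (dfall (real n + 1) (k + 1) lam - dfall 1 (k + 1) lam - (\<Sum>r=0..k-1. g r)) / real (k+1)"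
  proof -
    have "real (k+1) \<noteq> 0" by simp
    then show ?thesis using H by (simp add: eq_divide_eq mult.commute del: of_nat_Suc of_nat_add)
  qed
  then show ?thesis unfolding g_def[symmetric] by (simp add: diff_divide_distrib)
qed

end
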